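(* Let $N\ge1$, $\lambda,\mu\in\mathbb{K}$, $\mu\ne0$. The Lie algebra $\mathfrak{g}^{(2)}(N,\lambda,\mu)_+$ is isomorphic to $V^{\oplus N}\rtimes\mathfrak{g}_0$, where $\mathfrak{g}_0$ is the one-dimensional abelian Lie algebra spanned by $z$ and $V$ is the right $\mathfrak{g}_0$-module with basis $(f_i)_{i\ge0}$ and action $f_i.z=f_{i+1}$.
   Context: Base field $\mathbb{K}$ of characteristic zero. $\mathfrak{g}^{(2)}(N,\lambda,\mu)$ is $\mathbb{K}[X]$ with the preLie product $X^i\bullet X^j=i\lambda X^i$ if $j=0$, $i\mu X^{i+N}$ if $j=N$, and $0$ otherwise. $\mathfrak{g}^{(2)}(N,\lambda,\mu)_+$ denotes $\mathbb{K}[X]_+=\mathrm{Vect}(X^i,i\ge1)$ with bracket $[P,Q]=P\bullet Q-Q\bullet P$. For a Lie algebra $\mathfrak{g}$ and a right $\mathfrak{g}$-module $M$, $M\rtimes\mathfrak{g}$ is $M\oplus\mathfrak{g}$ with $M$ abelian, $[m,x]=m.x$ for $m\in M$, $x\in\mathfrak{g}$, and the bracket of $\mathfrak{g}$ on $\mathfrak{g}$. *)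

theory Defs
  imports "HOL-Computational_Algebra.Polynomial"
begin

definition g2_basis_prod :: "nat \<Rightarrow> 'k::field \<Rightarrow> 'k \<Rightarrow> nat \<Rightarrow> nat \<Rightarrow> 'k poly" where
  "g2_basis_prod N lam mu i j =
     (if j = 0 then smult (of_nat i * lam) (monom 1 i)
      else if j = N then smult (of_nat i * mu) (monom 1 (i + N))
      else 0)"

definition g2_prod :: "nat \<Rightarrow> 'k::field \<Rightarrow> 'k \<Rightarrow> 'k poly \<Rightarrow> 'k poly \<Rightarrow> 'k poly" where
  "g2_prod N lam mu P Q =
     (\<Sum>i\<le>degree P. \<Sum>j\<le>degree Q. smult (coeff P i * coeff Q j) (g2_basis_prod N lam mu i j))"

definition g2_bracket :: "nat \<Rightarrow> 'k::field \<Rightarrow> 'k \<Rightarrow> 'k poly \<Rightarrow> 'k poly \<Rightarrow> 'k poly" where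
  "g2_bracket N lam mu P Q = g2_prod N lam mu P Q - g2_prod N lam mu Q P"

definition poly_plus :: "'k::field poly set" where
  "poly_plus = {P. coeff P 0 = 0}"

text \<open>V is encoded as K[t]; basis vector f_i is monom 1 i.\<close>
definition V_basis :: "nat \<Rightarrow> 'k::field poly" where
  "V_basis i = monom 1 i"

definition V_act_z :: "'k::field poly \<Rightarrow> 'k poly" where
  "V_act_z v = (\<Sum>i\<le>degree v. smult (coeff v i) (V_basis (Suc i)))"

text \<open>V^(direct sum N): families indexed by j < N (zero outside).\<close>
definition VN_carrier :: "nat \<Rightarrow> (nat \<Rightarrow> 'k::field poly) set" where
  "VN_carrier N = {m. \<forall>j\<ge>N. m j = 0}"

definition VN_act :: "(nat \<Rightarrow> 'k::field poly) \<Rightarrow> 'k \<Rightarrow> (nat \<Rightarrow> 'k poly)" where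
  "VN_act m c = (\<lambda>j. smult c (V_act_z (m j)))"

definition sd_bracket ::
  "('m::minus \<Rightarrow> 'g \<Rightarrow> 'm) \<Rightarrow> ('g \<Rightarrow> 'g \<Rightarrow> 'g) \<Rightarrow> 'm \<times> 'g \<Rightarrow> 'm \<times> 'g \<Rightarrow> 'm \<times> 'g" where
  "sd_bracket act br p q = (act (fst p) (snd q) - act (fst q) (snd p), br (snd p) (snd q))"

text \<open>Operations on V^N x| g0 (g0 one-dimensional abelian, identified with K via c z).\<close>
definition VN_sd_add :: "(nat \<Rightarrow> 'k::field poly) \<times> 'k \<Rightarrow> (nat \<Rightarrow> 'k poly) \<times> 'k \<Rightarrow> (nat \<Rightarrow> 'k poly) \<times> 'k" where
  "VN_sd_add p q = (\<lambda>j. fst p j + fst q j, snd p + snd q)"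

definition VN_sd_smult :: "'k::field \<Rightarrow> (nat \<Rightarrow> 'k poly) \<times> 'k \<Rightarrow> (nat \<Rightarrow> 'k poly) \<times> 'k" where
  "VN_sd_smult c p = (\<lambda>j. smult c (fst p j), c * snd p)"

definition VN_sd_bracket :: "(nat \<Rightarrow> 'k::field poly) \<times> 'k \<Rightarrow> (nat \<Rightarrow> 'k poly) \<times> 'k \<Rightarrow> (nat \<Rightarrow> 'k poly) \<times> 'k" where
  "VN_sd_bracket = sd_bracket VN_act (\<lambda>_ _. 0)"

definition VN_sd_carrier :: "nat \<Rightarrow> ((nat \<Rightarrow> 'k::field poly) \<times> 'k) set" where
  "VN_sd_carrier N = VN_carrier N \<times> UNIV"

definition lie_iso ::
  "'a set \<Rightarrow> ('k \<Rightarrow> 'a \<Rightarrow> 'a) \<Rightarrow> ('a \<Rightarrow> 'a \<Rightarrow> 'a) \<Rightarrow> ('a \<Rightarrow> 'a \<Rightarrow> 'a) \<Rightarrow>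
   'b set \<Rightarrow> ('k \<Rightarrow> 'b \<Rightarrow> 'b) \<Rightarrow> ('b \<Rightarrow> 'b \<Rightarrow> 'b) \<Rightarrow> ('b \<Rightarrow> 'b \<Rightarrow> 'b) \<Rightarrow>
   ('a \<Rightarrow> 'b) \<Rightarrow> bool" where
  "lie_iso A sA addA brA B sB addB brB \<phi> \<longleftrightarrow>
     bij_betw \<phi> A B \<and>
     (\<forall>x\<in>A. \<forall>y\<in>A. \<phi> (addA x y) = addB (\<phi> x) (\<phi> y)) \<and>
     (\<forall>c. \<forall>x\<in>A. \<phi> (sA c x) = sB c (\<phi> x)) \<and>
     (\<forall>x\<in>A. \<forall>y\<in>A. \<phi> (brA x y) = brB (\<phi> x) (\<phi> y))"

end

theory Submission
  imports Defs
begin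

definition ee :: "nat \<Rightarrow> nat \<Rightarrow> nat \<Rightarrow> nat" where
  "ee N j k = Suc j + (k + (if Suc j = N then 1 else 0)) * N"
definition dj :: "nat \<Rightarrow> nat \<Rightarrow> nat" where "dj N n = (n - 1) mod N"
definition dk :: "nat \<Rightarrow> nat \<Rightarrow> nat" where
  "dk N n = (n - 1) div N - (if (n - 1) mod N = N - 1 then 1 else 0)"

lemma ee_inv: assumes "j < N" shows "dj N (ee N j k) = j" "dk N (ee N j k) = k"
proof -
  have h: "ee N j k - 1 = j + (k + (if Suc j = N then 1 else 0)) * N" by (simp add: ee_def)
  show "dj N (ee N j k) = j" unfolding dj_def h using assms by simp
  show "dk N (ee N j k) = k" unfolding dk_def h using assms by auto
qed

lemma ee_dec: assumes "1 \<le> N" "1 \<le> n" "n \<noteq> N" shows "ee N (dj N n) (dk N n) = n"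
proof -
  define r where "r = (n-1) mod N"
  define q where "q = (n-1) div N"
  have nq: "n - 1 = r + q * N" unfolding r_def q_def by simp
  have rN: "r < N" unfolding r_def using assms by simp
  show ?thesis
  proof (cases "r = N - 1")
    case True
    have "q \<ge> 1" using nq True assms by (cases q) auto
    then show ?thesis using True nq assms unfolding ee_def dj_def dk_def r_def[symmetric] q_def[symmetric]
      by (cases q) auto
  next
    case False
    then show ?thesis using nq rN assms unfolding ee_def dj_def dk_def r_def[symmetric] q_def[symmetric]
      by auto
  qed
qed

lemma ee_ge: assumes "1 \<le> N" shows "ee N j k \<ge> Suc k" "ee N j k \<ge> 1"
proof -
  have kk: "k * N \<ge> k" using assms by simp
  have "ee N j k \<ge> Suc j + k * N" by (simp add: ee_def add_mult_distrib)
  then show "ee N j k \<ge> Suc k" using kk by linarith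
  then show "ee N j k \<ge> 1" by simp
qed

lemma ee_neq: assumes "1 \<le> N" "j < N" shows "ee N j k \<noteq> N"
proof
  assume h: "ee N j k = N"
  show False
  proof (cases "Suc j = N")
    case True then show ?thesis using h assms unfolding ee_def by simp
  next
    case False
    then have "Suc j + k * N = N" using h unfolding ee_def by simp
    then show ?thesis using False assms by (cases k) auto
  qed
qed

lemma ee_Suc: "ee N j (Suc k) = ee N j k + N" unfolding ee_def by simp


lemma coeff_basis: assumes "N \<noteq> 0" shows
  "coeff (g2_basis_prod N lam mu i j) n =
    (if j = 0 \<and> n = i then of_nat i * lam else 0) + (if j = N \<and> n = i + N then of_nat i * mu else 0)"
  using assms by (auto simp: g2_basis_prod_def)

lemma sum_if_le: "(\<Sum>j\<le>(d::nat). (if j = a then f j else 0)) = (if a \<le> d then f a else 0)"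
  by (simp add: sum.delta)

lemma coeff_g2_prod: assumes "N \<noteq> 0" shows
  "coeff (g2_prod N lam mu P Q) n = coeff Q 0 * lam * of_nat n * coeff P n +
     (if N \<le> n then coeff Q N * mu * of_nat (n - N) * coeff P (n - N) else 0)"
proof -
  have "coeff (g2_prod N lam mu P Q) n = (\<Sum>i\<le>degree P. \<Sum>j\<le>degree Q.
      coeff P i * coeff Q j * ((if j = 0 \<and> n = i then of_nat i * lam else 0) + (if j = N \<and> n = i + N then of_nat i * mu else 0)))"
    by (simp add: g2_prod_def coeff_sum coeff_basis[OF assms])
  also have "\<dots> = (\<Sum>i\<le>degree P. (if n = i then coeff P i * coeff Q 0 * of_nat i * lam else 0) +
      (if n = i + N then coeff P i * coeff Q N * of_nat i * mu else 0))"
  proof (rule sum.cong[OF refl])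
    fix i
    have e: "\<And>j. coeff P i * coeff Q j * ((if j = 0 \<and> n = i then of_nat i * lam else 0) + (if j = N \<and> n = i + N then of_nat i * mu else 0))
       = (if j = 0 then (if n = i then coeff P i * coeff Q 0 * of_nat i * lam else 0) else 0) +
         (if j = N then (if n = i + N then coeff P i * coeff Q N * of_nat i * mu else 0) else 0)"
      by (auto simp: algebra_simps)
    have z: "\<not> N \<le> degree Q \<Longrightarrow> coeff Q N = 0" by (simp add: coeff_eq_0)
    show "(\<Sum>j\<le>degree Q. coeff P i * coeff Q j * ((if j = 0 \<and> n = i then of_nat i * lam else 0) + (if j = N \<and> n = i + N then of_nat i * mu else 0)))
      = (if n = i then coeff P i * coeff Q 0 * of_nat i * lam else 0) +
      (if n = i + N then coeff P i * coeff Q N * of_nat i * mu else 0)"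
      unfolding e sum.distrib sum_if_le using z by auto
  qed
  also have "\<dots> = (\<Sum>i\<le>degree P. (if i = n then coeff P i * coeff Q 0 * of_nat i * lam else 0)) +
      (\<Sum>i\<le>degree P. (if N \<le> n \<and> i = n - N then coeff P i * coeff Q N * of_nat i * mu else 0))"
    unfolding sum.distrib by (intro arg_cong2[where f="(+)"] sum.cong) auto
  also have "\<dots> = coeff Q 0 * lam * of_nat n * coeff P n +
     (if N \<le> n then coeff Q N * mu * of_nat (n - N) * coeff P (n - N) else 0)"
  proof -
    have a: "\<not> n \<le> degree P \<Longrightarrow> coeff P n = 0" by (simp add: coeff_eq_0)
    have b: "\<not> n - N \<le> degree P \<Longrightarrow> coeff P (n-N) = 0" by (simp add: coeff_eq_0)
    have 1: "(\<Sum>i\<le>degree P. (if i = n then coeff P i * coeff Q 0 * of_nat i * lam else 0)) = coeff Q 0 * lam * of_nat n * coeff P n"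
      unfolding sum_if_le using a by auto
    have 2: "(\<Sum>i\<le>degree P. (if N \<le> n \<and> i = n - N then coeff P i * coeff Q N * of_nat i * mu else 0)) =
       (if N \<le> n then coeff Q N * mu * of_nat (n - N) * coeff P (n - N) else 0)"
    proof (cases "N \<le> n")
      case True then show ?thesis using sum_if_le[of "n-N"] b by auto
    qed simp
    show ?thesis using 1 2 by simp
  qed
  finally show ?thesis .
qed

lemma coeff_bracket: assumes "N \<noteq> 0" "P \<in> poly_plus" "Q \<in> poly_plus" shows
  "coeff (g2_bracket N lam mu P Q) n =
     (if N \<le> n then mu * of_nat (n - N) * (coeff Q N * coeff P (n - N) - coeff P N * coeff Q (n - N)) else 0)"
  using assms by (simp add: g2_bracket_def coeff_g2_prod poly_plus_def algebra_simps)

lemma coeff_V_act_z: "coeff (V_act_z v) k = (if k = 0 then 0 else coeff v (k - 1))"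
proof -
  have "coeff (V_act_z v) k = (\<Sum>i\<le>degree v. if Suc i = k then coeff v i else 0)"
    by (simp add: V_act_z_def coeff_sum V_basis_def if_distrib cong: if_cong)
  also have "\<dots> = (\<Sum>i\<le>degree v. if i = k - 1 then (if k = 0 then 0 else coeff v i) else 0)"
    by (intro sum.cong) auto
  also have "\<dots> = (if k = 0 then 0 else coeff v (k - 1))"
    unfolding sum_if_le by (auto simp: coeff_eq_0)
  finally show ?thesis .
qed


fun aa :: "nat \<Rightarrow> 'k::field_char_0 \<Rightarrow> nat \<Rightarrow> nat \<Rightarrow> 'k" where
  "aa N mu j 0 = 1"
| "aa N mu j (Suc k) = mu * of_nat (ee N j k) * aa N mu j k"

lemma aa_nz: assumes "1 \<le> N" "mu \<noteq> 0" shows "aa N mu j k \<noteq> 0"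
proof (induction k)
  case (Suc k)
  have "ee N j k \<ge> 1" using ee_ge(2)[OF assms(1)] .
  then show ?case using Suc assms by simp
qed simp

definition comp :: "nat \<Rightarrow> 'k::field_char_0 \<Rightarrow> 'k poly \<Rightarrow> nat \<Rightarrow> 'k poly" where
  "comp N mu P j = (if j < N then Abs_poly (\<lambda>k. coeff P (ee N j k) / aa N mu j k) else 0)"

definition phi :: "nat \<Rightarrow> 'k::field_char_0 \<Rightarrow> 'k poly \<Rightarrow> (nat \<Rightarrow> 'k poly) \<times> 'k" where
  "phi N mu P = (comp N mu P, coeff P N)"

lemma coeff_comp: assumes "1 \<le> N" shows
  "coeff (comp N mu P j) k = (if j < N then coeff P (ee N j k) / aa N mu j k else 0)"
proof (cases "j < N")
  case True
  have "coeff (Abs_poly (\<lambda>k. coeff P (ee N j k) / aa N mu j k)) = (\<lambda>k. coeff P (ee N j k) / aa N mu j k)"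
  proof (rule coeff_Abs_poly[where n="degree P"])
    fix i assume "i > degree P"
    then have "ee N j i > degree P" using ee_ge(1)[OF assms, of i j] by linarith
    then show "coeff P (ee N j i) / aa N mu j i = 0" by (simp add: coeff_eq_0)
  qed
  then show ?thesis using True by (simp add: comp_def)
qed (simp add: comp_def)

definition psi :: "nat \<Rightarrow> 'k::field_char_0 \<Rightarrow> (nat \<Rightarrow> 'k poly) \<Rightarrow> 'k \<Rightarrow> 'k poly" where
  "psi N mu m x = Abs_poly (\<lambda>n. if n = 0 then 0 else if n = N then x
       else coeff (m (dj N n)) (dk N n) * aa N mu (dj N n) (dk N n))"

lemma coeff_psi: assumes "1 \<le> N" shows
  "coeff (psi N mu m x) = (\<lambda>n. if n = 0 then 0 else if n = N then x
       else coeff (m (dj N n)) (dk N n) * aa N mu (dj N n) (dk N n))"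
  unfolding psi_def
proof (rule coeff_Abs_poly[where n="(2 + (\<Sum>j<N. degree (m j))) * N"])
  define D where "D = (\<Sum>j<N. degree (m j))"
  fix n assume n: "n > (2 + (\<Sum>j<N. degree (m j))) * N"
  then have n': "n - 1 \<ge> (2 + D) * N" unfolding D_def by simp
  have "(n - 1) div N \<ge> (2 + D) * N div N" using div_le_mono[OF n'] .
  then have q: "(n - 1) div N \<ge> 2 + D" using assms by simp
  have djN: "dj N n < N" unfolding dj_def using assms by simp
  have "degree (m (dj N n)) \<le> D" unfolding D_def
    by (rule member_le_sum) (use djN in auto)
  moreover have "dk N n > D" unfolding dk_def using q by auto
  ultimately have "coeff (m (dj N n)) (dk N n) = 0" by (simp add: coeff_eq_0)
  moreover have "n \<noteq> 0" "n \<noteq> N" using n assms by (auto simp: algebra_simps) 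
  ultimately show "(if n = 0 then 0 else if n = N then x
       else coeff (m (dj N n)) (dk N n) * aa N mu (dj N n) (dk N n)) = 0" by simp
qed


theorem mainTheorem16:
  fixes N :: nat and lam mu :: "'k::field_char_0"
  assumes "N \<ge> 1" and "mu \<noteq> 0"
  shows "\<exists>\<phi> :: 'k poly \<Rightarrow> (nat \<Rightarrow> 'k poly) \<times> 'k.
           lie_iso poly_plus smult (+) (g2_bracket N lam mu)
                   (VN_sd_carrier N) VN_sd_smult VN_sd_add VN_sd_bracket \<phi>"
proof (intro exI[of _ "phi N mu"])
  note N1 = assms(1) and mu = assms(2)
  have N0: "N \<noteq> 0" using N1 by simp
  note cc = coeff_comp[OF N1]
  note nz = aa_nz[OF N1 mu]
  have inj: "inj_on (phi N mu) poly_plus"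
  proof (rule inj_onI)
    fix P Q :: "'k poly" assume P: "P \<in> poly_plus" and Q: "Q \<in> poly_plus" and e: "phi N mu P = phi N mu Q"
    show "P = Q"
    proof (rule poly_eqI)
      fix n
      show "coeff P n = coeff Q n"
      proof (cases "n = 0")
        case True then show ?thesis using P Q by (simp add: poly_plus_def)
      next
        case n0: False
        show ?thesis
        proof (cases "n = N")
          case True then show ?thesis using e by (simp add: phi_def)
        next
          case False
          have dec: "ee N (dj N n) (dk N n) = n" using ee_dec[OF N1, of n] n0 False by simp
          have djN: "dj N n < N" unfolding dj_def using N1 by simp
          have "coeff (comp N mu P (dj N n)) (dk N n) = coeff (comp N mu Q (dj N n)) (dk N n)"
            using e by (simp add: phi_def)
          then have "coeff P n / aa N mu (dj N n) (dk N n) = coeff Q n / aa N mu (dj N n) (dk N n)"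
            unfolding cc dec using djN by simp
          then show ?thesis using nz by simp
        qed
      qed
    qed
  qed
  have img: "phi N mu ` poly_plus = VN_sd_carrier N"
  proof
    show "phi N mu ` poly_plus \<subseteq> VN_sd_carrier N"
      by (auto simp: phi_def VN_sd_carrier_def VN_carrier_def comp_def)
  next
    show "VN_sd_carrier N \<subseteq> phi N mu ` poly_plus"
    proof
      fix p :: "(nat \<Rightarrow> 'k poly) \<times> 'k" assume p: "p \<in> VN_sd_carrier N"
      obtain m x where px: "p = (m, x)" by fastforce
      have m: "\<And>j. j \<ge> N \<Longrightarrow> m j = 0" using p px by (auto simp: VN_sd_carrier_def VN_carrier_def)
      note cp = coeff_psi[OF N1, of mu m x]
      have "psi N mu m x \<in> poly_plus" by (simp add: poly_plus_def cp)
      moreover have "phi N mu (psi N mu m x) = p"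
      proof -
        have "comp N mu (psi N mu m x) = m"
        proof
          fix j show "comp N mu (psi N mu m x) j = m j"
          proof (cases "j < N")
            case True
            show ?thesis
            proof (rule poly_eqI)
              fix k
              show "coeff (comp N mu (psi N mu m x) j) k = coeff (m j) k"
                using True ee_neq[OF N1 True, of k] ee_ge(2)[OF N1, of j k] ee_inv[OF True, of k] nz
                unfolding cc cp by simp
            qed
          next
            case False then show ?thesis using m by (simp add: comp_def)
          qed
        qed
        moreover have "coeff (psi N mu m x) N = x" using N0 by (simp add: cp)
        ultimately show ?thesis by (simp add: phi_def px)
      qed
      ultimately show "p \<in> phi N mu ` poly_plus" by blast
    qed
  qed
  have add: "\<forall>x\<in>poly_plus. \<forall>y\<in>poly_plus. phi N mu (x + y) = VN_sd_add (phi N mu x) (phi N mu y)"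
  proof (intro ballI)
    fix P Q :: "'k poly"
    have "comp N mu (P + Q) = (\<lambda>j. comp N mu P j + comp N mu Q j)"
      by (intro ext poly_eqI) (simp add: cc add_divide_distrib)
    then show "phi N mu (P + Q) = VN_sd_add (phi N mu P) (phi N mu Q)"
      by (simp add: phi_def VN_sd_add_def)
  qed
  have sm: "\<forall>c. \<forall>x\<in>poly_plus. phi N mu (smult c x) = VN_sd_smult c (phi N mu x)"
  proof (intro allI ballI)
    fix c and P :: "'k poly"
    have "comp N mu (smult c P) = (\<lambda>j. smult c (comp N mu P j))"
      by (intro ext poly_eqI) (simp add: cc)
    then show "phi N mu (smult c P) = VN_sd_smult c (phi N mu P)"
      by (simp add: phi_def VN_sd_smult_def)
  qed
  have br: "\<forall>x\<in>poly_plus. \<forall>y\<in>poly_plus. phi N mu (g2_bracket N lam mu x y) = VN_sd_bracket (phi N mu x) (phi N mu y)"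
  proof (intro ballI)
    fix P Q :: "'k poly" assume P: "P \<in> poly_plus" and Q: "Q \<in> poly_plus"
    note cb = coeff_bracket[OF N0 P Q, of lam mu]
    have "comp N mu (g2_bracket N lam mu P Q) = VN_act (comp N mu P) (coeff Q N) - VN_act (comp N mu Q) (coeff P N)"
    proof (intro ext poly_eqI)
      fix j k
      show "coeff (comp N mu (g2_bracket N lam mu P Q) j) k = coeff ((VN_act (comp N mu P) (coeff Q N) - VN_act (comp N mu Q) (coeff P N)) j) k"
      proof (cases "j < N")
        case False then show ?thesis by (simp add: cc VN_act_def coeff_V_act_z)
      next
        case True
        show ?thesis
        proof (cases k)
          case 0
          have "coeff (g2_bracket N lam mu P Q) (ee N j 0) = 0"
          proof (cases "Suc j = N")
            case True then show ?thesis by (simp add: cb ee_def)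
          next
            case False then show ?thesis using True by (simp add: cb ee_def)
          qed
          then show ?thesis using 0 True by (simp add: cc VN_act_def coeff_V_act_z)
        next
          case (Suc k')
          have ge: "N \<le> ee N j k + 0" unfolding Suc ee_Suc by simp
          have e1: "ee N j (Suc k') - N = ee N j k'" by (simp add: ee_Suc)
          have ne: "of_nat (ee N j k') \<noteq> (0::'k)" using ee_ge(2)[OF N1, of j k'] by simp
          have "coeff (comp N mu (g2_bracket N lam mu P Q) j) k =
             mu * of_nat (ee N j k') * (coeff Q N * coeff P (ee N j k') - coeff P N * coeff Q (ee N j k'))
              / (mu * of_nat (ee N j k') * aa N mu j k')"
            using True Suc by (simp add: cc cb e1 ee_Suc)
          also have "\<dots> = coeff Q N * (coeff P (ee N j k') / aa N mu j k') - coeff P N * (coeff Q (ee N j k') / aa N mu j k')"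
            using mu ne nz[of j k'] by (simp add: field_simps)
          finally show ?thesis using True Suc by (simp add: cc VN_act_def coeff_V_act_z)
        qed
      qed
    qed
    moreover have "coeff (g2_bracket N lam mu P Q) N = 0" by (simp add: cb)
    ultimately show "phi N mu (g2_bracket N lam mu P Q) = VN_sd_bracket (phi N mu P) (phi N mu Q)"
      by (simp add: phi_def VN_sd_bracket_def sd_bracket_def)
  qed
  show "lie_iso poly_plus smult (+) (g2_bracket N lam mu) (VN_sd_carrier N) VN_sd_smult VN_sd_add VN_sd_bracket (phi N mu)"
    unfolding lie_iso_def bij_betw_def using inj img add sm br by blast
qed

end
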